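(* Let $\bm{\mu}\in X^{\mathcal{L}(\mathcal{T})}$ with $V_{s_0}(\bm{\mu})\neq\theta$. Let $\ell\in\mathcal{L}(\mathcal{T})$ satisfy $w^{s_0}_\ell(\bm{\mu})>0$ and let $s_0,s_1,\dots,s_k=\ell$ be the nodes on the path from the root to $\ell$. Then for every $s\in\{s_0,s_1,\dots,s_k\}$, \[w^s_\ell(\bm{\mu})=\frac{d_s(\bm{\mu})}{d(\mu_\ell,\theta)}.\]
   Context: $\mathcal{T}$ is a finite rooted tree with node set $S$, root $s_0$, children $\mathcal{C}(s)$, leaves $\mathcal{L}(\mathcal{T})$, $\mathcal{D}(s)$ the leaves descending from $s$; internal labels $L(s)\in\{\text{MAX},\text{MIN}\}$. $X\subseteq\mathbb{R}$ mean-parameter set of a one-parameter exponential family; $d(x,y)$ KL divergence between members with means $x,y$; threshold $\theta\in X$. $V_s(\bm{\mu})=\mu_s$ at leaves, max/min of children's values at MAX/MIN nodes; $a_s(\bm{\mu})=$'win' iff $V_s(\bm{\mu})\ge\theta$. Recursive weights: $a^*=a_{s_0}(\bm{\mu})$; $P=$MAX, $Q=$MIN if $a^*=$'win', swapped if 'lose'. Leaf $s$: $w^s_s=1$, $d_s=d(\mu_s,\theta)$ if ($a^*=$'win', $\mu_s\ge\theta$) or ($a^*=$'lose', $\mu_s<\theta$), else $0$. $L(s)=P$: $d_s=\max_c d_c$, fixed $c^*(s)\in\arg\max_c d_c$, if $d_s>0$: $w^s_\ell=w^{c^*(s)}_\ell$ on $\mathcal{D}(c^*(s))$, $0$ elsewhere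 in $\mathcal{D}(s)$. $L(s)=Q$, all $d_c>0$: $d_s=(\sum_c1/d_c)^{-1}$, $w^s_\ell=\frac{w^c_\ell/d_c}{\sum_{c'}1/d_{c'}}$ for $\ell\in\mathcal{D}(c)$. $L(s)=Q$ otherwise: $d_s=0$. Internal $s$ with $d_s=0$: $\bm{w}^s$ fixed arbitrary probability vector on $\mathcal{D}(s)$. *)

theory Defs
  imports Complex_Main
begin

datatype lbl = MaxNode | MinNode

text \<open>Every node carries an identifier of type 'n
  (identifiers are required to be pairwise distinct, see wf_tree); leaves are
  identified with their identifiers. A subtree stands for the node at its root.\<close>
datatype 'n gtree = Leaf 'n | Node 'n lbl "'n gtree list"

fun nid :: "'n gtree \<Rightarrow> 'n" where
  "nid (Leaf n) = n"
| "nid (Node n L ts) = n"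

fun node_ids :: "'n gtree \<Rightarrow> 'n list" where
  "node_ids (Leaf n) = [n]"
| "node_ids (Node n L ts) = n # concat (map node_ids ts)"

fun leaves :: "'n gtree \<Rightarrow> 'n set" where
  "leaves (Leaf n) = {n}"
| "leaves (Node n L ts) = \<Union> (set (map leaves ts))"

fun subtrees :: "'n gtree \<Rightarrow> 'n gtree set" where
  "subtrees (Leaf n) = {Leaf n}"
| "subtrees (Node n L ts) = insert (Node n L ts) (\<Union> (set (map subtrees ts)))"

fun nonempty_children :: "'n gtree \<Rightarrow> bool" where
  "nonempty_children (Leaf n) = True"
| "nonempty_children (Node n L ts) = (ts \<noteq> [] \<and> (\<forall>b\<in>set (map nonempty_children ts). b))"

definition wf_tree :: "'n gtree \<Rightarrow> bool" where
  "wf_tree T \<longleftrightarrow> distinct (node_ids T) \<and> nonempty_children T"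

fun V :: "('n \<Rightarrow> real) \<Rightarrow> 'n gtree \<Rightarrow> real" where
  "V mu (Leaf n) = mu n"
| "V mu (Node n MaxNode ts) = Max (set (map (V mu) ts))"
| "V mu (Node n MinNode ts) = Min (set (map (V mu) ts))"

text \<open>P label: MaxNode if a* = win, MinNode if a* = lose\<close>
definition Plbl :: "bool \<Rightarrow> lbl" where
  "Plbl win = (if win then MaxNode else MinNode)"

definition dcombine :: "bool \<Rightarrow> real list \<Rightarrow> real" where
  "dcombine isP ds =
     (if isP then Max (set ds)
      else if (\<forall>x\<in>set ds. x > 0) then 1 / sum_list (map (\<lambda>x. 1 / x) ds)
      else 0)"

text \<open>d_s(mu); kl is the divergence d, th the threshold, win encodes a* = 'win'\<close>
fun dd :: "(real \<Rightarrow> real \<Rightarrow> real) \<Rightarrow> real \<Rightarrow> bool \<Rightarrow> ('n \<Rightarrow> real) \<Rightarrow> 'n gtree \<Rightarrow> real" where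
  "dd kl th win mu (Leaf n) =
     (if (win \<and> mu n \<ge> th) \<or> (\<not> win \<and> mu n < th) then kl (mu n) th else 0)"
| "dd kl th win mu (Node n L ts) = dcombine (L = Plbl win) (map (dd kl th win mu) ts)"

text \<open>w^s_l(mu); cstar n is the fixed chosen child (by identifier) of a P-node n,
  arb n is the fixed arbitrary probability vector used at internal node n when d_n = 0.
  Weights outside D(s) are 0.\<close>
fun ww :: "(real \<Rightarrow> real \<Rightarrow> real) \<Rightarrow> real \<Rightarrow> bool \<Rightarrow> ('n \<Rightarrow> real) \<Rightarrow> ('n \<Rightarrow> 'n)
           \<Rightarrow> ('n \<Rightarrow> 'n \<Rightarrow> real) \<Rightarrow> 'n gtree \<Rightarrow> 'n \<Rightarrow> real" where
  "ww kl th win mu cstar arb (Leaf n) l = (if l = n then 1 else 0)"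
| "ww kl th win mu cstar arb (Node n L ts) l =
     (if dd kl th win mu (Node n L ts) = 0 then (if l \<in> leaves (Node n L ts) then arb n l else 0)
      else if L = Plbl win then
        sum_list (map (\<lambda>c. if nid c = cstar n then ww kl th win mu cstar arb c l else 0) ts)
      else sum_list (map (\<lambda>c. ww kl th win mu cstar arb c l / dd kl th win mu c) ts)
           / sum_list (map (\<lambda>c. 1 / dd kl th win mu c) ts))"

definition valid_cstar :: "(real \<Rightarrow> real \<Rightarrow> real) \<Rightarrow> real \<Rightarrow> bool \<Rightarrow> ('n \<Rightarrow> real)
    \<Rightarrow> ('n \<Rightarrow> 'n) \<Rightarrow> 'n gtree \<Rightarrow> bool" where
  "valid_cstar kl th win mu cstar T \<longleftrightarrow>
     (\<forall>n ts. Node n (Plbl win) ts \<in> subtrees T \<longrightarrow>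
        (\<exists>c\<in>set ts. nid c = cstar n \<and>
            dd kl th win mu c = Max (set (map (dd kl th win mu) ts))))"

definition valid_arb :: "('n \<Rightarrow> 'n \<Rightarrow> real) \<Rightarrow> 'n gtree \<Rightarrow> bool" where
  "valid_arb arb T \<longleftrightarrow>
     (\<forall>n L ts. Node n L ts \<in> subtrees T \<longrightarrow>
        (\<forall>l\<in>leaves (Node n L ts). arb n l \<ge> 0) \<and>
        (\<Sum>l\<in>leaves (Node n L ts). arb n l) = 1)"

end

theory Submission
  imports Defs
begin

lemma sum_list_zero_all: "(\<forall>x\<in>set xs. f x = (0::real)) \<Longrightarrow> sum_list (map f xs) = 0"
  by (induction xs) auto

lemma sum_list_single:
  assumes "distinct xs" "c \<in> set xs" "\<forall>x\<in>set xs. x \<noteq> c \<longrightarrow> f x = (0::real)"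
  shows "sum_list (map f xs) = f c"
  using assms
proof (induction xs)
  case Nil then show ?case by simp
next
  case (Cons a xs)
  show ?case
  proof (cases "a = c")
    case True
    then have "sum_list (map f xs) = 0" using Cons.prems by (intro sum_list_zero_all) auto
    then show ?thesis using True by simp
  next
    case False
    then show ?thesis using Cons by auto
  qed
qed

lemma sum_list_pos_all:
  assumes "xs \<noteq> []" "\<forall>x\<in>set xs. f x > (0::real)"
  shows "sum_list (map f xs) > 0"
  using assms
proof (induction xs)
  case Nil then show ?case by simp
next
  case (Cons a xs)
  then show ?case
    by (cases "xs = []") (auto intro: add_pos_pos)
qed

lemma leaves_ids: "leaves s \<subseteq> set (node_ids s)"
  by (induction s rule: gtree.induct) auto

lemma nid_in: "nid s \<in> set (node_ids s)"
  by (cases s) auto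

lemma self_sub: "s \<in> subtrees s"
  by (cases s) auto

lemma sub_leaves: "s' \<in> subtrees s \<Longrightarrow> leaves s' \<subseteq> leaves s"
  by (induction s rule: gtree.induct) auto

lemma ids_ne: "node_ids s \<noteq> []"
  by (cases s) auto

lemma distinct_children:
  assumes "distinct (concat (map node_ids ts))"
  shows "(\<forall>c\<in>set ts. distinct (node_ids c)) \<and> distinct ts \<and>
    (\<forall>c c'. c \<in> set ts \<and> c' \<in> set ts \<and> c \<noteq> c' \<longrightarrow> set (node_ids c) \<inter> set (node_ids c') = {})"
proof -
  have ne: "[] \<notin> set (map node_ids ts)" using ids_ne by (metis (mono_tags) ex_map_conv)
  have r: "removeAll [] (map node_ids ts) = map node_ids ts" using ne by (simp add: removeAll_id)
  from assms[unfolded distinct_concat_iff r] have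
    a: "distinct (map node_ids ts)" and b: "\<forall>ys\<in>set (map node_ids ts). distinct ys"
    and c: "\<forall>ys zs. ys \<in> set (map node_ids ts) \<and> zs \<in> set (map node_ids ts) \<and> ys \<noteq> zs \<longrightarrow> set ys \<inter> set zs = {}"
    by auto
  have "distinct ts" using a by (simp add: distinct_map)
  moreover have "\<forall>c c'. c \<in> set ts \<and> c' \<in> set ts \<and> c \<noteq> c' \<longrightarrow> set (node_ids c) \<inter> set (node_ids c') = {}"
  proof (intro allI impI)
    fix c1 c2 assume h: "c1 \<in> set ts \<and> c2 \<in> set ts \<and> c1 \<noteq> c2"
    then have "node_ids c1 \<noteq> node_ids c2" using a by (auto simp: distinct_map inj_on_def)
    then show "set (node_ids c1) \<inter> set (node_ids c2) = {}" using c h by auto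
  qed
  ultimately show ?thesis using b by auto
qed

lemma ww_out: "l \<notin> leaves s \<Longrightarrow> ww kl th win mu cstar arb s l = 0"
proof (induction s rule: gtree.induct)
  case (Leaf x)
  then show ?case by simp
next
  case (Node n L ts)
  have z: "\<forall>c\<in>set ts. ww kl th win mu cstar arb c l = 0"
    using Node by auto
  show ?case
    using Node.prems z
    by (simp del: dd.simps add: sum_list_zero_all)
qed

lemma dd_pos:
  assumes "nonempty_children s" "\<forall>x\<in>leaves s. mu x \<in> X" "th \<in> X"
    "\<forall>x\<in>X. \<forall>y\<in>X. kl x y \<ge> 0" "\<forall>x\<in>X. \<forall>y\<in>X. kl x y = 0 \<longleftrightarrow> x = y"
    "(win \<and> V mu s > th) \<or> (\<not> win \<and> V mu s < th)"
  shows "dd kl th win mu s > 0"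
  using assms
proof (induction s rule: gtree.induct)
  case (Leaf x)
  then have "mu x \<in> X" by simp
  then have "kl (mu x) th \<ge> 0" "kl (mu x) th \<noteq> 0" using Leaf.prems by auto
  then show ?case using Leaf.prems(6) by auto
next
  case (Node n L ts)
  let ?G = "\<lambda>c. (win \<and> V mu c > th) \<or> (\<not> win \<and> V mu c < th)"
  have ne: "ts \<noteq> []" using Node.prems(1) by simp
  have fin: "finite (set (map (V mu) ts))" "set (map (V mu) ts) \<noteq> {}" using ne by auto
  have IH: "\<And>c. c \<in> set ts \<Longrightarrow> ?G c \<Longrightarrow> dd kl th win mu c > 0"
  proof -
    fix c assume c: "c \<in> set ts" "?G c"
    show "dd kl th win mu c > 0"
      using Node.IH[OF c(1)] Node.prems c by auto
  qed
  have good: "if L = Plbl win then (\<exists>c\<in>set ts. ?G c) else (\<forall>c\<in>set ts. ?G c)"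
  proof (cases L)
    case MaxNode
    note VV = Node.prems(6)[unfolded MaxNode V.simps]
    show ?thesis
    proof (cases win)
      case True
      obtain v where "v \<in> set (map (V mu) ts)" "v = Max (set (map (V mu) ts))"
        using Max_in[OF fin] by blast
      then show ?thesis using True VV MaxNode by (auto simp: Plbl_def)
    next
      case False
      have "\<forall>c\<in>set ts. V mu c \<le> Max (set (map (V mu) ts))" using fin by auto
      then have "\<forall>c\<in>set ts. V mu c < th" using False VV by (meson le_less_trans)
      then show ?thesis using False MaxNode by (auto simp: Plbl_def)
    qed
  next
    case MinNode
    note VV = Node.prems(6)[unfolded MinNode V.simps]
    show ?thesis
    proof (cases win)
      case False
      obtain v where "v \<in> set (map (V mu) ts)" "v = Min (set (map (V mu) ts))"
        using Min_in[OF fin] by blast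
      then show ?thesis using False VV MinNode by (auto simp: Plbl_def)
    next
      case True
      have "\<forall>c\<in>set ts. V mu c \<ge> Min (set (map (V mu) ts))" using fin by auto
      then have "\<forall>c\<in>set ts. V mu c > th" using True VV by (meson less_le_trans)
      then show ?thesis using True MinNode by (auto simp: Plbl_def)
    qed
  qed
  show ?case
  proof (cases "L = Plbl win")
    case True
    then obtain c where c: "c \<in> set ts" "?G c" using good by auto
    have "dd kl th win mu c \<le> Max (set (map (dd kl th win mu) ts))"
      using c by auto
    then show ?thesis using IH[OF c] True by (simp add: dcombine_def)
  next
    case False
    then have all: "\<forall>c\<in>set ts. dd kl th win mu c > 0" using good IH by auto
    have "sum_list (map (\<lambda>c. 1 / dd kl th win mu c) ts) > 0"
      using sum_list_pos_all[OF ne] all by auto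
    then show ?thesis using False all by (simp add: dcombine_def o_def)
  qed
qed

lemma main_path:
  assumes "distinct (node_ids s)" "nonempty_children s" "valid_cstar kl th win mu cstar s"
    "l \<in> leaves s" "dd kl th win mu s > 0" "ww kl th win mu cstar arb s l > 0"
  shows "\<forall>s'\<in>subtrees s. l \<in> leaves s' \<longrightarrow>
           ww kl th win mu cstar arb s' l = dd kl th win mu s' / kl (mu l) th"
  using assms
proof (induction s rule: gtree.induct)
  case (Leaf x)
  have lx: "l = x" using Leaf.prems(4) by simp
  have "dd kl th win mu (Leaf x) = kl (mu x) th"
    using Leaf.prems(5) by (simp only: dd.simps) (metis less_irrefl)
  then have "dd kl th win mu (Leaf x) / kl (mu l) th = 1" using Leaf.prems(5) lx by simp
  then show ?case using lx by simp
next
  case (Node n L ts)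
  let ?W = "\<lambda>s. ww kl th win mu cstar arb s l"
  let ?D = "dd kl th win mu"
  let ?K = "kl (mu l) th"
  let ?N = "Node n L ts"
  obtain c where c: "c \<in> set ts" "l \<in> leaves c" using Node.prems(4) by auto
  have ne: "ts \<noteq> []" using Node.prems(2) by simp
  have dist: "distinct (concat (map node_ids ts))" using Node.prems(1) by simp
  note DC = distinct_children[OF dist]
  have others: "\<forall>c'\<in>set ts. c' \<noteq> c \<longrightarrow> l \<notin> leaves c'"
  proof (intro ballI impI)
    fix c' assume "c' \<in> set ts" "c' \<noteq> c"
    then have "set (node_ids c') \<inter> set (node_ids c) = {}" using DC c by blast
    moreover have "l \<in> set (node_ids c)" using leaves_ids[of c] c(2) by (rule subsetD)
    ultimately have "l \<notin> set (node_ids c')" by (simp add: disjoint_iff) blast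
    then show "l \<notin> leaves c'" using leaves_ids[of c'] by (meson subsetD)
  qed
  have vc: "valid_cstar kl th win mu cstar c"
    unfolding valid_cstar_def
  proof (intro allI impI)
    fix n' ts' assume h: "Node n' (Plbl win) ts' \<in> subtrees c"
    have "Node n' (Plbl win) ts' \<in> subtrees ?N" using h c(1) by (simp; blast)
    then show "\<exists>c\<in>set ts'. nid c = cstar n' \<and> dd kl th win mu c = Max (set (map (dd kl th win mu) ts'))"
      using Node.prems(3) unfolding valid_cstar_def by blast
  qed
  have dne: "?D ?N \<noteq> 0" using Node.prems(5) by simp
  have step: "0 < ?D c \<and> 0 < ?W c \<and> (?W c = ?D c / ?K \<longrightarrow> ?W ?N = ?D ?N / ?K)"
  proof (cases "L = Plbl win")
    case True
    have Wn: "?W ?N = sum_list (map (\<lambda>c'. if nid c' = cstar n then ?W c' else 0) ts)"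
      using dne True by (simp del: dd.simps)
    also have "\<dots> = (if nid c = cstar n then ?W c else 0)"
      using DC c others by (intro sum_list_single) (auto simp: ww_out)
    finally have Wn2: "?W ?N = (if nid c = cstar n then ?W c else 0)" .
    then have nc: "nid c = cstar n" and Wc: "?W ?N = ?W c" using Node.prems(6)
      by (auto split: if_splits)
    obtain c0 where c0: "c0 \<in> set ts" "nid c0 = cstar n" "?D c0 = Max (set (map ?D ts))"
    proof -
      have "Node n (Plbl win) ts \<in> subtrees ?N" using True by simp
      then show ?thesis using that Node.prems(3) unfolding valid_cstar_def by blast
    qed
    have "c0 = c"
    proof (rule ccontr)
      assume "c0 \<noteq> c"
      then have "set (node_ids c0) \<inter> set (node_ids c) = {}" using DC c c0 by blast
      then show False using nid_in[of c0] nid_in[of c] nc c0(2) by auto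
    qed
    have Dn: "?D ?N = ?D c" using c0 \<open>c0 = c\<close> True by (simp add: dcombine_def)
    show ?thesis using Dn Wc Node.prems(5,6) by auto
  next
    case False
    have D0: "dcombine False (map ?D ts) > 0" using Node.prems(5) False by simp
    then have all: "\<forall>c'\<in>set ts. ?D c' > 0" by (auto simp: dcombine_def split: if_splits)
    let ?S = "sum_list (map (\<lambda>c'. 1 / ?D c') ts)"
    have Spos: "?S > 0" using sum_list_pos_all[OF ne] all by auto
    have Dn: "?D ?N = 1 / ?S" using False all by (simp add: dcombine_def o_def)
    have Wn: "?W ?N = sum_list (map (\<lambda>c'. ?W c' / ?D c') ts) / ?S"
      using dne False by (simp del: dd.simps)
    also have "sum_list (map (\<lambda>c'. ?W c' / ?D c') ts) = ?W c / ?D c"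
      using DC c others by (intro sum_list_single) (auto simp: ww_out)
    finally have Wn2: "?W ?N = ?W c / ?D c / ?S" .
    have Dc: "?D c > 0" using all c by auto
    have Wc: "?W c > 0"
    proof (rule ccontr)
      assume "\<not> ?W c > 0"
      then have "?W c / ?D c / ?S \<le> 0" using Dc Spos
        by (simp add: divide_nonpos_pos)
      then show False using Wn2 Node.prems(6) by simp
    qed
    have "?W c = ?D c / ?K \<Longrightarrow> ?W ?N = ?D ?N / ?K"
    proof -
      assume h: "?W c = ?D c / ?K"
      have "?W ?N = ?D c / ?K / ?D c / ?S" using Wn2 h by simp
      also have "\<dots> = 1 / ?S / ?K" using Dc by (simp add: field_simps)
      finally show "?W ?N = ?D ?N / ?K" using Dn by simp
    qed
    then show ?thesis using Dc Wc by blast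
  qed
  have IHc: "\<forall>s'\<in>subtrees c. l \<in> leaves s' \<longrightarrow> ?W s' = ?D s' / ?K"
  proof -
    have d1: "distinct (node_ids c)" using DC c(1) by blast
    have n1: "nonempty_children c" using Node.prems(2) c(1) by simp
    have p1: "0 < ?D c" "0 < ?W c" using step by auto
    show ?thesis by (rule Node.IH[OF c(1) d1 n1 vc c(2) p1])
  qed
  have "?W c = ?D c / ?K" using IHc self_sub[of c] c(2) by blast
  then have top: "?W ?N = ?D ?N / ?K" using step by blast
  show ?case
  proof (intro ballI impI)
    fix s' assume s': "s' \<in> subtrees ?N" "l \<in> leaves s'"
    show "?W s' = ?D s' / ?K"
    proof (cases "s' = ?N")
      case True then show ?thesis using top by simp
    next
      case False
      then obtain c' where c': "c' \<in> set ts" "s' \<in> subtrees c'" using s'(1) by auto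
      then have "l \<in> leaves c'" using sub_leaves s'(2) by blast
      then have "c' = c" using others c' by blast
      then show ?thesis using IHc c' s' by blast
    qed
  qed
qed

theorem proposition2:
  fixes T :: "'n gtree" and X :: "real set" and kl :: "real \<Rightarrow> real \<Rightarrow> real"
    and th :: real and mu :: "'n \<Rightarrow> real"
    and cstar :: "'n \<Rightarrow> 'n" and arb :: "'n \<Rightarrow> 'n \<Rightarrow> real" and l :: 'n
  assumes wf: "wf_tree T"
    and th_X: "th \<in> X"
    and mu_X: "\<forall>x\<in>leaves T. mu x \<in> X"
    and kl_nonneg: "\<forall>x\<in>X. \<forall>y\<in>X. kl x y \<ge> 0"
    and kl_zero: "\<forall>x\<in>X. \<forall>y\<in>X. kl x y = 0 \<longleftrightarrow> x = y"
    and cs: "valid_cstar kl th (V mu T \<ge> th) mu cstar T"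
    and ar: "valid_arb arb T"
    and neq: "V mu T \<noteq> th"
    and l_leaf: "l \<in> leaves T"
    and pos: "ww kl th (V mu T \<ge> th) mu cstar arb T l > 0"
  shows "\<forall>s\<in>subtrees T. l \<in> leaves s \<longrightarrow>
           ww kl th (V mu T \<ge> th) mu cstar arb s l
             = dd kl th (V mu T \<ge> th) mu s / kl (mu l) th"
proof -
  have ne: "nonempty_children T" and di: "distinct (node_ids T)" using wf by (auto simp: wf_tree_def)
  have "((V mu T \<ge> th) \<and> V mu T > th) \<or> (\<not> (V mu T \<ge> th) \<and> V mu T < th)" using neq by auto
  then have "dd kl th (V mu T \<ge> th) mu T > 0"
    using dd_pos[OF ne mu_X th_X kl_nonneg kl_zero] by blast
  then show ?thesis using main_path[OF di ne cs l_leaf _ pos] by blast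
qed

end
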